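(* Let $Y$ be a (closed) hyperplane in $c_0$. Then $Y$ has property-$(HB)$ in $c_0$ if and only if $Y$ is an $M$-summand in $c_0$.
   Context: $c_0$ is the space of real null sequences with the sup norm; $c_0^*=\ell_1$. For a closed subspace $Y$ of $X$, $Y^\perp=\{x^*\in X^*:x^*|_Y=0\}$. $Y$ has property-$(HB)$ in $X$ if there is a linear projection $P$ on $X^*$ with range $Y^\perp$ and $\|P\|=1$ such that, writing $G=(I-P)(X^* )$, for every $x^*=y^\#+y^\perp$ with $y^\#\in G$, $0\ne y^\perp\in Y^\perp$, one has $\|x^*\|>\|y^\#\|$ and $\|x^*\|\ge\|y^\perp\|$. $Y$ is an $M$-summand in $X$ if there is a closed subspace $W$ with $X=Y\oplus W$ and $\|y+w\|=\max\{\|y\|,\|w\|\}$ for all $y\in Y,w\in W$. *)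

theory Defs
  imports "HOL-Analysis.Analysis"
begin

text \<open>The Banach space c_0 is realised as the closed subspace of null sequences inside the
Banach space of bounded (automatically continuous) functions nat to real with the sup norm.\<close>

definition c0 :: "(nat \<Rightarrow>\<^sub>C real) set" where
  "c0 = {x. (apply_bcontfun x \<longlonglongrightarrow> 0)}"

text \<open>The dual of c_0 is identified with l_1 (as in the context): a sequence a with
summable absolute values acts on x in c_0 by the pairing sum a_n x_n.\<close>

definition l1 :: "(nat \<Rightarrow> real) set" where
  "l1 = {a. summable (\<lambda>n. \<bar>a n\<bar>)}"

definition norm1 :: "(nat \<Rightarrow> real) \<Rightarrow> real" where
  "norm1 a = (\<Sum>n. \<bar>a n\<bar>)"

definition pairing :: "(nat \<Rightarrow> real) \<Rightarrow> (nat \<Rightarrow>\<^sub>C real) \<Rightarrow> real" where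
  "pairing a x = (\<Sum>n. a n * apply_bcontfun x n)"

definition annihilator :: "(nat \<Rightarrow>\<^sub>C real) set \<Rightarrow> (nat \<Rightarrow> real) set" where
  "annihilator Y = {a \<in> l1. \<forall>y\<in>Y. pairing a y = 0}"

definition hyperplane_c0 :: "(nat \<Rightarrow>\<^sub>C real) set \<Rightarrow> bool" where
  "hyperplane_c0 Y \<longleftrightarrow> Y \<subseteq> c0 \<and> subspace Y \<and> closed Y \<and> Y \<noteq> c0 \<and>
     (\<exists>x0\<in>c0. \<forall>x\<in>c0. \<exists>y\<in>Y. \<exists>t::real. x = y + t *\<^sub>R x0)"

definition norm_one_projection_onto :: "((nat \<Rightarrow> real) \<Rightarrow> (nat \<Rightarrow> real)) \<Rightarrow> (nat \<Rightarrow> real) set \<Rightarrow> bool" where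
  "norm_one_projection_onto P R \<longleftrightarrow>
     (\<forall>a\<in>l1. \<forall>b\<in>l1. P (\<lambda>n. a n + b n) = (\<lambda>n. P a n + P b n)) \<and>
     (\<forall>a\<in>l1. \<forall>c::real. P (\<lambda>n. c * a n) = (\<lambda>n. c * P a n)) \<and>
     (\<forall>a\<in>l1. P (P a) = P a) \<and>
     P ` l1 = R \<and>
     bdd_above ((\<lambda>a. norm1 (P a)) ` {a \<in> l1. norm1 a \<le> 1}) \<and>
     Sup ((\<lambda>a. norm1 (P a)) ` {a \<in> l1. norm1 a \<le> 1}) = 1"

definition property_HB_c0 :: "(nat \<Rightarrow>\<^sub>C real) set \<Rightarrow> bool" where
  "property_HB_c0 Y \<longleftrightarrow>
     (\<exists>P. norm_one_projection_onto P (annihilator Y) \<and>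
        (let G = (\<lambda>a. (\<lambda>n. a n - P a n)) ` l1 in
          \<forall>g\<in>G. \<forall>z\<in>annihilator Y. z \<noteq> (\<lambda>n. 0) \<longrightarrow>
             norm1 (\<lambda>n. g n + z n) > norm1 g \<and> norm1 (\<lambda>n. g n + z n) \<ge> norm1 z))"

definition M_summand_c0 :: "(nat \<Rightarrow>\<^sub>C real) set \<Rightarrow> bool" where
  "M_summand_c0 Y \<longleftrightarrow>
     (\<exists>W. W \<subseteq> c0 \<and> subspace W \<and> closed W \<and> Y \<inter> W = {0} \<and>
        {y + w | y w. y \<in> Y \<and> w \<in> W} = c0 \<and>
        (\<forall>y\<in>Y. \<forall>w\<in>W. norm (y + w) = max (norm y) (norm w)))"

end

theory Submission
  imports Defs
begin


definition mkv :: "(nat \<Rightarrow> real) \<Rightarrow> (nat \<Rightarrow>\<^sub>C real)" where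
  "mkv f = Bcontfun f"

lemma vec_apply:
  assumes "\<And>n. \<bar>f n\<bar> \<le> B"
  shows "apply_bcontfun (mkv f) = f"
  unfolding mkv_def
  by (rule Bcontfun_inverse, rule bcontfun_normI[of _ B]) (auto simp: assms)

definition truncf :: "nat \<Rightarrow> (nat \<Rightarrow> real) \<Rightarrow> (nat \<Rightarrow>\<^sub>C real)" where
  "truncf N f = mkv (\<lambda>m. if m < N then f m else 0)"

lemma truncf_apply: "apply_bcontfun (truncf N f) m = (if m < N then f m else 0)"
proof -
  have bnd: "\<bar>(if m < N then f m else 0)\<bar> \<le> (\<Sum>k<N. \<bar>f k\<bar>)" for m
  proof (cases "m < N")
    case True
    then show ?thesis by (simp, intro member_le_sum) auto
  next
    case False
    then show ?thesis by (simp add: sum_nonneg)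
  qed
  show ?thesis unfolding truncf_def using vec_apply[of "\<lambda>m. if m < N then f m else 0", OF bnd] by simp
qed

definition ee :: "nat \<Rightarrow> (nat \<Rightarrow>\<^sub>C real)" where
  "ee k = mkv (\<lambda>m. if m = k then 1 else 0)"

lemma ee_apply: "apply_bcontfun (ee k) m = (if m = k then 1 else 0)"
  unfolding ee_def by (subst vec_apply[of _ 1]) auto

lemma truncf_Suc: "truncf (Suc N) f = truncf N f + f N *\<^sub>R ee N"
  by (rule bcontfun_eqI) (auto simp: truncf_apply ee_apply less_Suc_eq)

lemma abs_apply_le: "\<bar>apply_bcontfun x n\<bar> \<le> norm x"
  using norm_bounded[of x n] by simp

lemma norm_le_bc: "(\<And>n. \<bar>apply_bcontfun x n\<bar> \<le> B) \<Longrightarrow> norm x \<le> B"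
  by (rule norm_bound) simp

lemma c0_add: "x \<in> c0 \<Longrightarrow> y \<in> c0 \<Longrightarrow> x + y \<in> c0"
  unfolding c0_def using tendsto_add[of "apply_bcontfun x" 0 _ "apply_bcontfun y" 0] by auto

lemma c0_diff: "x \<in> c0 \<Longrightarrow> y \<in> c0 \<Longrightarrow> x - y \<in> c0"
  unfolding c0_def using tendsto_diff[of "apply_bcontfun x" 0 _ "apply_bcontfun y" 0] by auto

lemma c0_scale: "x \<in> c0 \<Longrightarrow> c *\<^sub>R x \<in> c0"
  unfolding c0_def using tendsto_mult[of "\<lambda>_. c" c _ "apply_bcontfun x" 0] by auto

lemma c0_zero: "0 \<in> c0"
  unfolding c0_def by simp

lemma c0_fin: "(\<And>n. n \<ge> N \<Longrightarrow> apply_bcontfun x n = 0) \<Longrightarrow> x \<in> c0"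
  unfolding c0_def mem_Collect_eq
  by (rule tendsto_eventually) (auto simp: eventually_sequentially)

lemma truncf_c0: "truncf N f \<in> c0"
  by (rule c0_fin[of N]) (simp add: truncf_apply)

lemma ee_c0: "ee k \<in> c0"
  by (rule c0_fin[of "Suc k"]) (simp add: ee_apply)

lemma l1_summable: "a \<in> l1 \<Longrightarrow> summable (\<lambda>n. \<bar>a n\<bar>)"
  by (simp add: l1_def)

lemma l1_abs_summable_mult: "a \<in> l1 \<Longrightarrow> summable (\<lambda>n. \<bar>a n * apply_bcontfun x n\<bar>)"
  apply (rule summable_comparison_test[where g="\<lambda>n. \<bar>a n\<bar> * norm x"])
   apply (auto simp: abs_mult intro!: mult_left_mono abs_apply_le summable_mult2 l1_summable)
  done

lemma l1_summable_mult: "a \<in> l1 \<Longrightarrow> summable (\<lambda>n. a n * apply_bcontfun x n)"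
  by (rule summable_rabs_cancel[OF l1_abs_summable_mult])

lemma norm1_nonneg: "a \<in> l1 \<Longrightarrow> 0 \<le> norm1 a"
  unfolding norm1_def by (rule suminf_nonneg) (auto simp: l1_def)

lemma pairing_bound: "a \<in> l1 \<Longrightarrow> \<bar>pairing a x\<bar> \<le> norm1 a * norm x"
proof -
  assume a: "a \<in> l1"
  have "\<bar>pairing a x\<bar> \<le> (\<Sum>n. \<bar>a n * apply_bcontfun x n\<bar>)"
    unfolding pairing_def by (rule summable_rabs[OF l1_abs_summable_mult[OF a]])
  also have "\<dots> \<le> (\<Sum>n. \<bar>a n\<bar> * norm x)"
    by (rule suminf_le) (auto simp: abs_mult intro!: mult_left_mono abs_apply_le summable_mult2 l1_summable a l1_abs_summable_mult[OF a, unfolded abs_mult])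
  also have "\<dots> = norm1 a * norm x"
    unfolding norm1_def by (rule suminf_mult2[symmetric]) (rule l1_summable[OF a])
  finally show ?thesis .
qed

lemma pairing_add: "a \<in> l1 \<Longrightarrow> pairing a (x + y) = pairing a x + pairing a y"
proof -
  assume a: "a \<in> l1"
  have "pairing a (x + y) = (\<Sum>n. a n * apply_bcontfun x n + a n * apply_bcontfun y n)"
    unfolding pairing_def by (simp add: distrib_left)
  also have "\<dots> = pairing a x + pairing a y"
    unfolding pairing_def by (rule suminf_add[symmetric]) (auto intro: l1_summable_mult[OF a])
  finally show ?thesis .
qed

lemma pairing_diff: "a \<in> l1 \<Longrightarrow> pairing a (x - y) = pairing a x - pairing a y"
proof -
  assume a: "a \<in> l1"
  have "pairing a (x - y) = (\<Sum>n. a n * apply_bcontfun x n - a n * apply_bcontfun y n)"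
    unfolding pairing_def by (simp add: right_diff_distrib)
  also have "\<dots> = pairing a x - pairing a y"
    unfolding pairing_def by (rule suminf_diff[symmetric]) (auto intro: l1_summable_mult[OF a])
  finally show ?thesis .
qed

lemma pairing_scale: "a \<in> l1 \<Longrightarrow> pairing a (c *\<^sub>R x) = c * pairing a x"
proof -
  assume a: "a \<in> l1"
  have "pairing a (c *\<^sub>R x) = (\<Sum>n. c * (a n * apply_bcontfun x n))"
    unfolding pairing_def by (simp add: algebra_simps)
  also have "\<dots> = c * pairing a x"
    unfolding pairing_def by (rule suminf_mult) (rule l1_summable_mult[OF a])
  finally show ?thesis .
qed

lemma pairing_fin: "(\<And>n. n \<ge> N \<Longrightarrow> apply_bcontfun x n = 0) \<Longrightarrow>
   pairing a x = (\<Sum>n<N. a n * apply_bcontfun x n)"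
  unfolding pairing_def by (rule suminf_finite) auto

lemma pairing_ee: "pairing a (ee k) = a k"
  using pairing_fin[of "Suc k" "ee k" a] by (simp add: ee_apply)

lemma l1_upd: "a \<in> l1 \<Longrightarrow> a(k := v) \<in> l1"
  unfolding l1_def mem_Collect_eq
  apply (rule summable_comparison_test[where g="\<lambda>n. \<bar>a n\<bar> + (if n = k then \<bar>v\<bar> else 0)"])
   apply (auto intro!: summable_add summable_single)
  done

lemma norm1_upd: "a \<in> l1 \<Longrightarrow> norm1 (a(k := v)) = norm1 a - \<bar>a k\<bar> + \<bar>v\<bar>"
proof -
  assume a: "a \<in> l1"
  have eq: "(\<lambda>n. \<bar>(a(k := v)) n\<bar>) = (\<lambda>n. \<bar>a n\<bar> + (if n = k then \<bar>v\<bar> - \<bar>a k\<bar> else 0))"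
    by auto
  have "norm1 (a(k := v)) = (\<Sum>n. \<bar>a n\<bar>) + (\<Sum>n. (if n = k then \<bar>v\<bar> - \<bar>a k\<bar> else 0))"
    unfolding norm1_def eq
    by (rule suminf_add[symmetric]) (auto intro: l1_summable[OF a] summable_single)
  also have "(\<Sum>n. (if n = k then \<bar>v\<bar> - \<bar>a k\<bar> else 0)) = \<bar>v\<bar> - \<bar>a k\<bar>"
    using sums_single[of k "\<lambda>_. \<bar>v\<bar> - \<bar>a k\<bar>"] sums_unique by fastforce
  finally show ?thesis unfolding norm1_def by simp
qed

lemma l1_scale: "a \<in> l1 \<Longrightarrow> (\<lambda>n. c * a n) \<in> l1"
  unfolding l1_def by (simp add: abs_mult summable_mult)

lemma norm1_scale: "a \<in> l1 \<Longrightarrow> norm1 (\<lambda>n. c * a n) = \<bar>c\<bar> * norm1 a"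
  unfolding norm1_def l1_def by (simp add: abs_mult suminf_mult)

lemma l1_add: "a \<in> l1 \<Longrightarrow> b \<in> l1 \<Longrightarrow> (\<lambda>n. a n + b n) \<in> l1"
  unfolding l1_def mem_Collect_eq
  apply (rule summable_comparison_test[where g="\<lambda>n. \<bar>a n\<bar> + \<bar>b n\<bar>"])
   apply (auto intro!: summable_add)
  done

lemma l1_diff: "a \<in> l1 \<Longrightarrow> b \<in> l1 \<Longrightarrow> (\<lambda>n. a n - b n) \<in> l1"
  unfolding l1_def mem_Collect_eq
  apply (rule summable_comparison_test[where g="\<lambda>n. \<bar>a n\<bar> + \<bar>b n\<bar>"])
   apply (auto intro!: summable_add)
  done

lemma l1_zero: "(\<lambda>n. 0) \<in> l1"
  unfolding l1_def by simp

lemma norm1_zero: "norm1 (\<lambda>n. 0) = 0"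
  unfolding norm1_def by simp




lemma small_imp_zero:
  fixes r C :: real
  assumes "\<And>e. e > 0 \<Longrightarrow> \<bar>r\<bar> \<le> e * C"
  shows "r = 0"
proof (rule ccontr)
  assume "r \<noteq> 0"
  then have r: "\<bar>r\<bar> > 0" by simp
  have C: "C > 0" using assms[of 1] r by simp
  have "\<bar>r\<bar> \<le> (\<bar>r\<bar> / (2 * C)) * C" using assms[of "\<bar>r\<bar> / (2 * C)"] r C by simp
  also have "\<dots> = \<bar>r\<bar> / 2" using C by simp
  finally show False using r by simp
qed

lemma hyperplane_functional:
  assumes "hyperplane_c0 Y"
  obtains a where "a \<in> l1" "a \<noteq> (\<lambda>n. 0)" "Y = {x \<in> c0. pairing a x = 0}"
proof -
  from assms obtain x0 where Yc0: "Y \<subseteq> c0" and sY: "subspace Y" and cY: "closed Y"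
    and ne: "Y \<noteq> c0" and x0: "x0 \<in> c0" and dec: "\<forall>x\<in>c0. \<exists>y\<in>Y. \<exists>t::real. x = y + t *\<^sub>R x0"
    unfolding hyperplane_c0_def by blast
  have Y0: "0 \<in> Y" using sY by (simp add: subspace_0)
  have Yadd: "x \<in> Y \<Longrightarrow> y \<in> Y \<Longrightarrow> x + y \<in> Y" for x y using sY by (simp add: subspace_add)
  have Ydiff: "x \<in> Y \<Longrightarrow> y \<in> Y \<Longrightarrow> x - y \<in> Y" for x y using sY by (simp add: subspace_diff)
  have Yscale: "x \<in> Y \<Longrightarrow> c *\<^sub>R x \<in> Y" for x c using sY by (simp add: subspace_scale)
  have x0Y: "x0 \<notin> Y"
  proof
    assume "x0 \<in> Y"
    have "c0 \<subseteq> Y"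
    proof
      fix x assume "x \<in> c0"
      then obtain y t where "y \<in> Y" "x = y + t *\<^sub>R x0" using bspec[OF dec] by blast
      then show "x \<in> Y" using Yadd Yscale \<open>x0 \<in> Y\<close> by simp
    qed
    then show False using ne Yc0 by blast
  qed
  define d where "d = infdist x0 Y"
  have d: "d > 0" unfolding d_def using infdist_pos_not_in_closed[OF cY _ x0Y] Y0 by blast
  have uniq: "s = t" if "x - s *\<^sub>R x0 \<in> Y" "x - t *\<^sub>R x0 \<in> Y" for x s t
  proof (rule ccontr)
    assume st: "s \<noteq> t"
    have "(x - s *\<^sub>R x0) - (x - t *\<^sub>R x0) \<in> Y" using that Ydiff by blast
    then have "(t - s) *\<^sub>R x0 \<in> Y" by (simp add: algebra_simps)
    then have "(1 / (t - s)) *\<^sub>R ((t - s) *\<^sub>R x0) \<in> Y" using Yscale by blast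
    then have "x0 \<in> Y" using st by simp
    then show False using x0Y by simp
  qed
  have ex: "\<exists>t. x - t *\<^sub>R x0 \<in> Y" if xc: "x \<in> c0" for x
  proof -
    obtain y t where yt: "y \<in> Y" "x = y + t *\<^sub>R x0" using bspec[OF dec xc] by blast
    have "x - t *\<^sub>R x0 = y" using yt(2) by simp
    then show ?thesis using yt(1) by auto
  qed
  define \<phi> where "\<phi> x = (THE t. x - t *\<^sub>R x0 \<in> Y)" for x
  have \<phi>1: "x - \<phi> x *\<^sub>R x0 \<in> Y" if xc: "x \<in> c0" for x
  proof -
    obtain t where t: "x - t *\<^sub>R x0 \<in> Y" using ex[OF xc] by blast
    have "\<exists>!t. x - t *\<^sub>R x0 \<in> Y"
      by (rule ex1I[of _ t]) (rule t, rule uniq[OF _ t])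
    then show ?thesis unfolding \<phi>_def by (rule theI')
  qed
  have \<phi>2: "\<phi> x = t" if "x - t *\<^sub>R x0 \<in> Y" for x t
    unfolding \<phi>_def by (rule the_equality) (rule that, rule uniq[OF _ that])
  have \<phi>add: "\<phi> (x + z) = \<phi> x + \<phi> z" if "x \<in> c0" "z \<in> c0" for x z
  proof (rule \<phi>2)
    have "(x - \<phi> x *\<^sub>R x0) + (z - \<phi> z *\<^sub>R x0) \<in> Y" using \<phi>1 that Yadd by blast
    then show "x + z - (\<phi> x + \<phi> z) *\<^sub>R x0 \<in> Y" by (simp add: algebra_simps)
  qed
  have \<phi>diff: "\<phi> (x - z) = \<phi> x - \<phi> z" if "x \<in> c0" "z \<in> c0" for x z
  proof (rule \<phi>2)
    have "(x - \<phi> x *\<^sub>R x0) - (z - \<phi> z *\<^sub>R x0) \<in> Y" using \<phi>1 that Ydiff by blast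
    then show "x - z - (\<phi> x - \<phi> z) *\<^sub>R x0 \<in> Y" by (simp add: algebra_simps)
  qed
  have \<phi>scale: "\<phi> (c *\<^sub>R x) = c * \<phi> x" if "x \<in> c0" for x c
  proof (rule \<phi>2)
    have "c *\<^sub>R (x - \<phi> x *\<^sub>R x0) \<in> Y" using \<phi>1 that Yscale by blast
    then show "c *\<^sub>R x - (c * \<phi> x) *\<^sub>R x0 \<in> Y" by (simp add: algebra_simps)
  qed
  have \<phi>bound: "\<bar>\<phi> x\<bar> * d \<le> norm x" if "x \<in> c0" for x
  proof (cases "\<phi> x = 0")
    case True
    then show ?thesis by simp
  next
    case False
    let ?t = "\<phi> x"
    have yY: "x - ?t *\<^sub>R x0 \<in> Y" using \<phi>1 that by blast
    then have mem: "(- (1 / ?t)) *\<^sub>R (x - ?t *\<^sub>R x0) \<in> Y" using Yscale by blast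
    have "d \<le> dist x0 ((- (1 / ?t)) *\<^sub>R (x - ?t *\<^sub>R x0))"
      unfolding d_def by (rule infdist_le[OF mem])
    also have "x0 - (- (1 / ?t)) *\<^sub>R (x - ?t *\<^sub>R x0) = (1 / ?t) *\<^sub>R x"
      using False by (simp add: algebra_simps)
    then have "dist x0 ((- (1 / ?t)) *\<^sub>R (x - ?t *\<^sub>R x0)) = norm x / \<bar>?t\<bar>"
      by (simp add: dist_norm)
    finally have "d \<le> norm x / \<bar>?t\<bar>" .
    then show ?thesis using False by (simp add: field_simps)
  qed
  have \<phi>Y: "x \<in> Y \<longleftrightarrow> \<phi> x = 0" if "x \<in> c0" for x
  proof
    assume "x \<in> Y" then show "\<phi> x = 0" by (intro \<phi>2) simp
  next
    assume "\<phi> x = 0" then show "x \<in> Y" using \<phi>1[OF that] by simp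
  qed
  define a where "a n = \<phi> (ee n)" for n
  have \<phi>trunc: "\<phi> (truncf N f) = (\<Sum>n<N. f n * a n)" for N f
  proof (induction N)
    case 0
    have "truncf 0 f = 0" by (rule bcontfun_eqI) (simp add: truncf_apply)
    then show ?case using \<phi>2[of 0 0] Y0 by simp
  next
    case (Suc N)
    have "\<phi> (truncf (Suc N) f) = \<phi> (truncf N f) + \<phi> (f N *\<^sub>R ee N)"
      unfolding truncf_Suc by (rule \<phi>add) (auto intro: truncf_c0 c0_scale ee_c0)
    also have "\<phi> (f N *\<^sub>R ee N) = f N * a N" unfolding a_def by (rule \<phi>scale) (rule ee_c0)
    finally show ?case using Suc by simp
  qed
  have norm_trunc_sgn: "norm (truncf N (\<lambda>n. sgn (a n))) \<le> 1" for N
    by (rule norm_le_bc) (auto simp: truncf_apply abs_sgn_eq)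
  have al1: "a \<in> l1"
    unfolding l1_def mem_Collect_eq
  proof (rule bounded_imp_summable[where B="1 / d"])
    fix n
    have "(\<Sum>k\<le>n. \<bar>a k\<bar>) = (\<Sum>k<Suc n. sgn (a k) * a k)"
      unfolding lessThan_Suc_atMost by (rule sum.cong) (auto simp: sgn_real_def)
    also have "\<dots> = \<phi> (truncf (Suc n) (\<lambda>k. sgn (a k)))" by (simp add: \<phi>trunc)
    also have "\<dots> \<le> 1 / d"
    proof -
      have "\<bar>\<phi> (truncf (Suc n) (\<lambda>k. sgn (a k)))\<bar> * d \<le> norm (truncf (Suc n) (\<lambda>k. sgn (a k)))"
        by (rule \<phi>bound[OF truncf_c0])
      also note norm_trunc_sgn
      finally have h: "\<bar>\<phi> (truncf (Suc n) (\<lambda>k. sgn (a k)))\<bar> * d \<le> 1" .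
      have "\<phi> (truncf (Suc n) (\<lambda>k. sgn (a k))) * d \<le> 1"
        using h d by (smt (verit) mult_right_mono)
      then show ?thesis using d by (simp add: field_simps)
    qed
    finally show "(\<Sum>k\<le>n. \<bar>a k\<bar>) \<le> 1 / d" .
  qed simp
  have \<phi>pair: "\<phi> x = pairing a x" if x: "x \<in> c0" for x
  proof -
    define C where "C = 1 / d + norm1 a"
    have "\<phi> x - pairing a x = 0"
    proof (rule small_imp_zero[where C=C])
      fix e :: real assume e: "e > 0"
      from x have "apply_bcontfun x \<longlonglongrightarrow> 0" unfolding c0_def by simp
      then obtain N where N: "\<And>n. n \<ge> N \<Longrightarrow> \<bar>apply_bcontfun x n\<bar> < e"
        using e by (auto simp: lim_sequentially dist_real_def)
      define tr where "tr = truncf N (apply_bcontfun x)"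
      have trc: "tr \<in> c0" unfolding tr_def by (rule truncf_c0)
      have nrm: "norm (x - tr) \<le> e"
        by (rule norm_le_bc) (use e N in \<open>auto simp: tr_def truncf_apply intro: less_imp_le\<close>)
      have eqtr: "\<phi> tr = pairing a tr"
        unfolding tr_def \<phi>trunc
        by (subst pairing_fin[of N]) (auto simp: truncf_apply mult.commute)
      have "\<phi> x - pairing a x = \<phi> (x - tr) - pairing a (x - tr)"
        using \<phi>diff[OF x trc] pairing_diff[OF al1] eqtr by simp
      also have "\<bar>\<dots>\<bar> \<le> \<bar>\<phi> (x - tr)\<bar> + \<bar>pairing a (x - tr)\<bar>" by simp
      also have "\<bar>\<phi> (x - tr)\<bar> \<le> norm (x - tr) / d"
        using \<phi>bound[OF c0_diff[OF x trc]] d by (simp add: field_simps)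
      also have "\<bar>pairing a (x - tr)\<bar> \<le> norm1 a * norm (x - tr)" by (rule pairing_bound[OF al1])
      also have "norm (x - tr) / d + norm1 a * norm (x - tr) = norm (x - tr) * C"
        unfolding C_def by (simp add: field_simps)
      also have "\<dots> \<le> e * C"
        using nrm norm1_nonneg[OF al1] d unfolding C_def by (intro mult_right_mono) auto
      finally show "\<bar>\<phi> x - pairing a x\<bar> \<le> e * C" by simp
    qed
    then show ?thesis by simp
  qed
  have Yeq: "Y = {x \<in> c0. pairing a x = 0}"
  proof (intro set_eqI iffI)
    fix x assume "x \<in> Y"
    then have "x \<in> c0" using Yc0 by blast
    then show "x \<in> {x \<in> c0. pairing a x = 0}"
      using \<phi>Y[OF \<open>x \<in> c0\<close>] \<phi>pair[OF \<open>x \<in> c0\<close>] \<open>x \<in> Y\<close> by simp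
  next
    fix x assume "x \<in> {x \<in> c0. pairing a x = 0}"
    then have "x \<in> c0" "pairing a x = 0" by auto
    then show "x \<in> Y" using \<phi>Y \<phi>pair by simp
  qed
  have anz: "a \<noteq> (\<lambda>n. 0)"
  proof
    assume "a = (\<lambda>n. 0)"
    then have "pairing a x = 0" for x unfolding pairing_def by simp
    then show False using Yeq ne by auto
  qed
  show ?thesis using that al1 anz Yeq by blast
qed




lemma pairing_lscale: "a \<in> l1 \<Longrightarrow> pairing (\<lambda>n. c * a n) x = c * pairing a x"
  unfolding pairing_def
  by (simp add: mult.assoc suminf_mult l1_summable_mult)

lemma annih:
  assumes al1: "a \<in> l1" and anz: "a \<noteq> (\<lambda>n. 0)" and Yeq: "Y = {x \<in> c0. pairing a x = 0}"
  shows "annihilator Y = {b. \<exists>c. b = (\<lambda>n. c * a n)}"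
proof (intro set_eqI iffI)
  fix b assume "b \<in> annihilator Y"
  then have bl1: "b \<in> l1" and bY: "\<And>y. y \<in> Y \<Longrightarrow> pairing b y = 0"
    unfolding annihilator_def by auto
  from anz obtain k where ak: "a k \<noteq> 0" by auto
  have bn: "b n = (b k / a k) * a n" for n
  proof -
    define y where "y = ee n - (a n / a k) *\<^sub>R ee k"
    have yc0: "y \<in> c0" unfolding y_def by (intro c0_diff c0_scale ee_c0)
    have "pairing a y = a n - (a n / a k) * a k"
      unfolding y_def by (simp add: pairing_diff[OF al1] pairing_scale[OF al1] pairing_ee)
    also have "\<dots> = 0" using ak by simp
    finally have "y \<in> Y" using yc0 Yeq by simp
    then have "pairing b y = 0" by (rule bY)
    moreover have "pairing b y = b n - (a n / a k) * b k"
      unfolding y_def by (simp add: pairing_diff[OF bl1] pairing_scale[OF bl1] pairing_ee)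
    ultimately show ?thesis by simp
  qed
  have "b = (\<lambda>n. (b k / a k) * a n)" by (rule ext, rule bn)
  then show "b \<in> {b. \<exists>c. b = (\<lambda>n. c * a n)}" by blast
next
  fix b assume "b \<in> {b. \<exists>c. b = (\<lambda>n. c * a n)}"
  then obtain c where bc: "b = (\<lambda>n. c * a n)" by auto
  show "b \<in> annihilator Y"
    unfolding annihilator_def bc using Yeq l1_scale[OF al1] pairing_lscale[OF al1] by auto
qed

lemma pairing_single:
  assumes "\<And>n. n \<noteq> k \<Longrightarrow> a n = 0"
  shows "pairing a x = a k * apply_bcontfun x k"
proof -
  have "(\<lambda>n. a n * apply_bcontfun x n) = (\<lambda>n. if n = k then a k * apply_bcontfun x k else 0)"
    using assms by auto
  then show ?thesis unfolding pairing_def using sums_single[of k "\<lambda>_. a k * apply_bcontfun x k"] sums_unique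
    by metis
qed

lemma apply_continuous: "continuous_on UNIV (\<lambda>x::nat \<Rightarrow>\<^sub>C real. apply_bcontfun x n)"
proof (rule lipschitz_on_continuous_on)
  show "1-lipschitz_on UNIV (\<lambda>x::nat \<Rightarrow>\<^sub>C real. apply_bcontfun x n)"
    by (rule lipschitz_onI) (auto intro: dist_bounded)
qed

lemma single_imp_M:
  assumes al1: "a \<in> l1" and ak: "a k \<noteq> 0" and sing: "\<And>n. n \<noteq> k \<Longrightarrow> a n = 0"
    and Yeq: "Y = {x \<in> c0. pairing a x = 0}"
  shows "M_summand_c0 Y"
proof -
  have Yk: "Y = {x \<in> c0. apply_bcontfun x k = 0}"
    using Yeq pairing_single[OF sing] ak by auto
  define W where "W = {x::nat \<Rightarrow>\<^sub>C real. \<forall>n. n \<noteq> k \<longrightarrow> apply_bcontfun x n = 0}"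
  have Wc0: "W \<subseteq> c0" unfolding W_def by (auto intro!: c0_fin[of "Suc k"])
  have sW: "subspace W" unfolding W_def subspace_def by auto
  have Weq: "W = (\<Inter>n\<in>-{k}. {x. apply_bcontfun x n = (\<lambda>x. 0) x})" unfolding W_def by auto
  have "closed {x. apply_bcontfun x n = (\<lambda>x::nat \<Rightarrow>\<^sub>C real. 0::real) x}" for n :: nat
    by (rule closed_Collect_eq[OF apply_continuous continuous_on_const])
  then have cW: "closed W" unfolding Weq by (intro closed_INT) blast
  have YW: "Y \<inter> W = {0}"
  proof (intro set_eqI iffI)
    fix x assume "x \<in> Y \<inter> W"
    then have "apply_bcontfun x n = 0" for n using Yk W_def by (cases "n = k") auto
    then have "x = 0" by (intro bcontfun_eqI) simp
    then show "x \<in> {0}" by simp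
  next
    fix x :: "nat \<Rightarrow>\<^sub>C real" assume "x \<in> {0}"
    then show "x \<in> Y \<inter> W" using Yk W_def c0_zero by auto
  qed
  have sum: "{y + w |y w. y \<in> Y \<and> w \<in> W} = c0"
  proof (intro set_eqI iffI)
    fix x assume "x \<in> {y + w |y w. y \<in> Y \<and> w \<in> W}"
    then obtain y w where "y \<in> Y" "w \<in> W" "x = y + w" by auto
    then show "x \<in> c0" using Yk Wc0 c0_add by auto
  next
    fix x assume xc: "x \<in> c0"
    define w where "w = apply_bcontfun x k *\<^sub>R ee k"
    define y where "y = x - w"
    have "y \<in> Y" unfolding Yk y_def w_def using xc by (auto intro!: c0_diff c0_scale ee_c0 simp: ee_apply)
    moreover have "w \<in> W" unfolding W_def w_def by (simp add: ee_apply)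
    moreover have "x = y + w" unfolding y_def by simp
    ultimately show "x \<in> {y + w |y w. y \<in> Y \<and> w \<in> W}" by blast
  qed
  have nm: "norm (y + w) = max (norm y) (norm w)" if "y \<in> Y" "w \<in> W" for y w
  proof -
    have yk: "apply_bcontfun y k = 0" using that Yk by auto
    have wn: "\<And>n. n \<noteq> k \<Longrightarrow> apply_bcontfun w n = 0" using that W_def by auto
    have "norm (y + w) \<le> max (norm y) (norm w)"
    proof (rule norm_le_bc)
      fix n
      show "\<bar>apply_bcontfun (y + w) n\<bar> \<le> max (norm y) (norm w)"
        using yk wn[of n] abs_apply_le[of y n] abs_apply_le[of w n]
        by (cases "n = k") auto
    qed
    moreover have "norm y \<le> norm (y + w)"
    proof (rule norm_le_bc)
      fix n
      show "\<bar>apply_bcontfun y n\<bar> \<le> norm (y + w)"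
        using yk wn[of n] abs_apply_le[of "y + w" n] by (cases "n = k") auto
    qed
    moreover have "norm w \<le> norm (y + w)"
    proof (rule norm_le_bc)
      fix n
      show "\<bar>apply_bcontfun w n\<bar> \<le> norm (y + w)"
        using yk wn[of n] abs_apply_le[of "y + w" n] by (cases "n = k") auto
    qed
    ultimately show ?thesis by linarith
  qed
  have nmb: "\<forall>y\<in>Y. \<forall>w\<in>W. norm (y + w) = max (norm y) (norm w)" using nm by blast
  show ?thesis unfolding M_summand_c0_def
    by (rule exI[of _ W]) (intro conjI Wc0 sW cW YW sum nmb)
qed

lemma two_le_norm1:
  assumes al1: "a \<in> l1" and jk: "j \<noteq> k"
  shows "\<bar>a j\<bar> + \<bar>a k\<bar> \<le> norm1 a"
proof -
  have "(\<Sum>n\<in>{j, k}. \<bar>a n\<bar>) \<le> (\<Sum>n. \<bar>a n\<bar>)"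
    by (rule sum_le_suminf) (auto intro: l1_summable[OF al1])
  then show ?thesis using jk unfolding norm1_def by simp
qed

lemma M_imp_single:
  assumes al1: "a \<in> l1" and anz: "a \<noteq> (\<lambda>n. 0)" and Yeq: "Y = {x \<in> c0. pairing a x = 0}"
    and M: "M_summand_c0 Y"
  shows "\<exists>k. \<forall>n. n \<noteq> k \<longrightarrow> a n = 0"
proof (rule ccontr)
  assume ns: "\<not> ?thesis"
  from anz obtain k where ak: "a k \<noteq> 0" by auto
  from ns obtain j where jk: "j \<noteq> k" and aj: "a j \<noteq> 0" by auto
  obtain W where Wp: "W \<subseteq> c0 \<and> subspace W \<and> closed W \<and> Y \<inter> W = {0} \<and>
        {y + w | y w. y \<in> Y \<and> w \<in> W} = c0 \<and>
        (\<forall>y\<in>Y. \<forall>w\<in>W. norm (y + w) = max (norm y) (norm w))"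
    using M unfolding M_summand_c0_def by (elim exE) (erule that)
  have Wc0: "W \<subseteq> c0" using Wp by (elim conjE) assumption
  have sW: "subspace W" using Wp by (elim conjE) assumption
  have YW: "Y \<inter> W = {0}" using Wp by (elim conjE) assumption
  have sum: "{y + w |y w. y \<in> Y \<and> w \<in> W} = c0" using Wp by (elim conjE) assumption
  have nm: "\<forall>y\<in>Y. \<forall>w\<in>W. norm (y + w) = max (norm y) (norm w)" using Wp by (elim conjE) assumption
  have "ee k \<in> {y + w |y w. y \<in> Y \<and> w \<in> W}" using sum ee_c0 by simp
  then obtain y w where yY: "y \<in> Y" and wW: "w \<in> W" and eq: "ee k = y + w" by auto
  have "pairing a w = a k"
    using eq yY Yeq pairing_add[OF al1, of y w] pairing_ee[of a k] by simp
  then have pw: "pairing a w \<noteq> 0" using ak by simp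
  define w1 where "w1 = (1 / pairing a w) *\<^sub>R w"
  have w1W: "w1 \<in> W" unfolding w1_def using wW sW by (simp add: subspace_scale)
  have w1c0: "w1 \<in> c0" using w1W Wc0 by blast
  have pw1: "pairing a w1 = 1" unfolding w1_def using pw by (simp add: pairing_scale[OF al1])
  define M where "M = norm w1"
  have Mpos: "M > 0"
  proof -
    have "w1 \<noteq> 0" using pw1 unfolding pairing_def by auto
    then show ?thesis unfolding M_def by simp
  qed
  have dec: "norm x = max (norm (x - pairing a x *\<^sub>R w1)) (\<bar>pairing a x\<bar> * M)" if xc: "x \<in> c0" for x
  proof -
    have "x - pairing a x *\<^sub>R w1 \<in> Y"
      using Yeq xc w1c0 pw1 by (auto intro!: c0_diff c0_scale simp: pairing_diff[OF al1] pairing_scale[OF al1])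
    moreover have "pairing a x *\<^sub>R w1 \<in> W" using w1W sW by (simp add: subspace_scale)
    ultimately have "norm ((x - pairing a x *\<^sub>R w1) + pairing a x *\<^sub>R w1)
        = max (norm (x - pairing a x *\<^sub>R w1)) (norm (pairing a x *\<^sub>R w1))" using nm by blast
    then show ?thesis unfolding M_def by simp
  qed
  have AM: "norm1 a * M \<le> 1"
  proof -
    have "(\<Sum>n. \<bar>a n\<bar> * M) \<le> 1"
    proof (rule suminf_le_const)
      show "summable (\<lambda>n. \<bar>a n\<bar> * M)" by (rule summable_mult2[OF l1_summable[OF al1]])
    next
      fix N
      define x where "x = truncf N (\<lambda>n. sgn (a n))"
      have xc: "x \<in> c0" unfolding x_def by (rule truncf_c0)
      have nx: "norm x \<le> 1" unfolding x_def by (rule norm_le_bc) (auto simp: truncf_apply abs_sgn_eq)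
      have "pairing a x = (\<Sum>n<N. a n * sgn (a n))"
        unfolding x_def by (subst pairing_fin[of N]) (auto simp: truncf_apply)
      also have "\<dots> = (\<Sum>n<N. \<bar>a n\<bar>)" by (rule sum.cong) (auto simp: sgn_real_def)
      finally have px: "pairing a x = (\<Sum>n<N. \<bar>a n\<bar>)" .
      have "\<bar>pairing a x\<bar> * M \<le> norm x" using dec[OF xc] by simp
      then have "(\<Sum>n<N. \<bar>a n\<bar>) * M \<le> 1" using px nx by (simp add: sum_nonneg)
      then show "(\<Sum>n<N. \<bar>a n\<bar> * M) \<le> 1" by (simp add: sum_distrib_right)
    qed
    then show ?thesis unfolding norm1_def using suminf_mult2[OF l1_summable[OF al1], of M] by simp
  qed
  have eqw: "a n * apply_bcontfun w1 n = \<bar>a n\<bar> * M" for n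
  proof -
    define f where "f n = \<bar>a n\<bar> * M - a n * apply_bcontfun w1 n" for n
    have fnn: "0 \<le> f n" for n
    proof -
      have "a n * apply_bcontfun w1 n \<le> \<bar>a n\<bar> * \<bar>apply_bcontfun w1 n\<bar>" by (simp add: abs_mult[symmetric])
      also have "\<dots> \<le> \<bar>a n\<bar> * M" unfolding M_def by (intro mult_left_mono abs_apply_le) simp
      finally show ?thesis unfolding f_def by simp
    qed
    have sf: "summable f" unfolding f_def
      by (intro summable_diff summable_mult2 l1_summable[OF al1] l1_summable_mult[OF al1])
    have "suminf f = (\<Sum>n. \<bar>a n\<bar> * M) - pairing a w1"
      unfolding f_def pairing_def
      by (rule suminf_diff[symmetric]) (intro summable_mult2 l1_summable[OF al1] l1_summable_mult[OF al1])+
    also have "\<dots> = norm1 a * M - 1" unfolding norm1_def using pw1 suminf_mult2[OF l1_summable[OF al1], of M] by simp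
    finally have "suminf f \<le> 0" using AM by simp
    moreover have "0 \<le> suminf f" by (rule suminf_nonneg[OF sf fnn])
    ultimately have "suminf f = 0" by simp
    then have "\<forall>n. f n = 0" using suminf_eq_zero_iff[OF sf fnn] by simp
    then show ?thesis unfolding f_def by simp
  qed
  have "a k * apply_bcontfun w1 k = a k * (sgn (a k) * M)"
    using eqw[of k] by (cases "a k > 0") (auto simp: sgn_real_def)
  then have w1k: "apply_bcontfun w1 k = sgn (a k) * M" using ak by simp
  have sumjk: "\<bar>a j\<bar> + \<bar>a k\<bar> \<le> norm1 a" by (rule two_le_norm1[OF al1 jk])
  have akM1: "\<bar>a k\<bar> * M < 1"
  proof -
    have "\<bar>a j\<bar> * M + \<bar>a k\<bar> * M \<le> norm1 a * M" using sumjk Mpos by (simp add: distrib_right[symmetric])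
    moreover have "\<bar>a j\<bar> * M > 0" using aj Mpos by simp
    ultimately show ?thesis using AM by linarith
  qed
  have akMpos: "\<bar>a k\<bar> * M > 0" using ak Mpos by simp
  define x where "x = sgn (a k) *\<^sub>R ee k"
  have xapp: "apply_bcontfun x n = (if n = k then sgn (a k) else 0)" for n
    unfolding x_def by (simp add: ee_apply)
  have xc: "x \<in> c0" unfolding x_def by (intro c0_scale ee_c0)
  have px: "pairing a x = \<bar>a k\<bar>"
    unfolding x_def by (simp add: pairing_scale[OF al1] pairing_ee sgn_real_def)
  have nx: "norm x = 1"
  proof (rule antisym)
    show "norm x \<le> 1" by (rule norm_le_bc) (auto simp: xapp abs_sgn_eq)
    show "1 \<le> norm x" using abs_apply_le[of x k] ak by (simp add: xapp abs_sgn_eq)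
  qed
  define c where "c = max (1 - \<bar>a k\<bar> * M) (\<bar>a k\<bar> * M)"
  have c1: "c < 1" unfolding c_def using akM1 akMpos by simp
  have "norm (x - pairing a x *\<^sub>R w1) \<le> c"
  proof (rule norm_le_bc)
    fix n
    show "\<bar>apply_bcontfun (x - pairing a x *\<^sub>R w1) n\<bar> \<le> c"
    proof (cases "n = k")
      case True
      have "apply_bcontfun (x - pairing a x *\<^sub>R w1) n = sgn (a k) * (1 - \<bar>a k\<bar> * M)"
        using True by (simp add: xapp px w1k algebra_simps)
      also have "\<bar>\<dots>\<bar> = 1 - \<bar>a k\<bar> * M" using ak akM1 by (simp add: abs_mult abs_sgn_eq)
      finally show ?thesis unfolding c_def by simp
    next
      case False
      have "\<bar>apply_bcontfun (x - pairing a x *\<^sub>R w1) n\<bar> = \<bar>a k\<bar> * \<bar>apply_bcontfun w1 n\<bar>"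
        using False by (simp add: xapp px abs_mult)
      also have "\<dots> \<le> \<bar>a k\<bar> * M" unfolding M_def by (intro mult_left_mono abs_apply_le) simp
      finally show ?thesis unfolding c_def by simp
    qed
  qed
  moreover have "\<bar>pairing a x\<bar> * M \<le> c" unfolding c_def px by simp
  ultimately have "norm x \<le> c" using dec[OF xc] by simp
  then show False using nx c1 by simp
qed




lemma norm1_ge_single: "b \<in> l1 \<Longrightarrow> \<bar>b k\<bar> \<le> norm1 b"
  using norm1_upd[of b k 0] norm1_nonneg[OF l1_upd[of b k 0]] by simp

lemma single_imp_HB:
  assumes al1: "a \<in> l1" and ak: "a k \<noteq> 0" and sing: "\<And>n. n \<noteq> k \<Longrightarrow> a n = 0"
    and Yeq: "Y = {x \<in> c0. pairing a x = 0}"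
  shows "property_HB_c0 Y"
proof -
  have anz: "a \<noteq> (\<lambda>n. 0)" using ak by auto
  have ann: "annihilator Y = {b. \<exists>c. b = (\<lambda>n. c * a n)}" by (rule annih[OF al1 anz Yeq])
  have aeq: "a = (\<lambda>n. 0)(k := a k)" using sing by (auto simp: fun_eq_iff)
  have na: "norm1 a = \<bar>a k\<bar>"
    by (subst aeq, subst norm1_upd[OF l1_zero]) (simp add: norm1_zero)
  define P where "P b = (\<lambda>n. (b k / a k) * a n)" for b :: "nat \<Rightarrow> real"
  have Pl1: "P b \<in> l1" for b unfolding P_def by (rule l1_scale[OF al1])
  have nP: "norm1 (P b) = \<bar>b k\<bar>" for b
    unfolding P_def using ak by (subst norm1_scale[OF al1]) (simp add: na abs_div)
  have S_le: "x \<le> 1" if "x \<in> (\<lambda>b. norm1 (P b)) ` {b \<in> l1. norm1 b \<le> 1}" for x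
  proof -
    from that obtain b where "b \<in> l1" "norm1 b \<le> 1" "x = norm1 (P b)" by auto
    then show ?thesis using nP[of b] norm1_ge_single[of b k] by simp
  qed
  define e where "e = (\<lambda>n::nat. 0::real)(k := 1)"
  have el1: "e \<in> l1" unfolding e_def by (rule l1_upd[OF l1_zero])
  have ne: "norm1 e = 1" unfolding e_def by (simp add: norm1_upd[OF l1_zero] norm1_zero)
  have one_in: "1 \<in> (\<lambda>b. norm1 (P b)) ` {b \<in> l1. norm1 b \<le> 1}"
  proof
    show "1 = norm1 (P e)" using nP[of e] by (simp add: e_def)
    show "e \<in> {b \<in> l1. norm1 b \<le> 1}" using el1 ne by simp
  qed
  have NP: "norm_one_projection_onto P (annihilator Y)"
    unfolding norm_one_projection_onto_def
  proof (intro conjI ballI allI)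
    fix b c assume "b \<in> l1" "c \<in> l1"
    show "P (\<lambda>n. b n + c n) = (\<lambda>n. P b n + P c n)"
      unfolding P_def by (simp add: fun_eq_iff add_divide_distrib distrib_right)
  next
    fix b and c :: real assume "b \<in> l1"
    show "P (\<lambda>n. c * b n) = (\<lambda>n. c * P b n)"
      unfolding P_def by (simp add: fun_eq_iff)
  next
    fix b assume "b \<in> l1"
    show "P (P b) = P b" unfolding P_def using ak by (simp add: fun_eq_iff)
  next
    show "P ` l1 = annihilator Y"
    proof (intro set_eqI iffI)
      fix b assume "b \<in> P ` l1"
      then obtain b' where "b = P b'" by auto
      then show "b \<in> annihilator Y" unfolding ann P_def by blast
    next
      fix b assume "b \<in> annihilator Y"
      then obtain c where bc: "b = (\<lambda>n. c * a n)" unfolding ann by blast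
      have "P b = b" unfolding bc P_def using ak by simp
      moreover have "b \<in> l1" unfolding bc by (rule l1_scale[OF al1])
      ultimately show "b \<in> P ` l1" by (metis image_eqI)
    qed
  next
    show "bdd_above ((\<lambda>b. norm1 (P b)) ` {b \<in> l1. norm1 b \<le> 1})"
      using S_le by (intro bdd_aboveI) 
  next
    show "Sup ((\<lambda>b. norm1 (P b)) ` {b \<in> l1. norm1 b \<le> 1}) = 1"
      by (rule cSup_eq_maximum[OF one_in S_le])
  qed
  have G: "norm1 (\<lambda>n. g n + z n) > norm1 g \<and> norm1 (\<lambda>n. g n + z n) \<ge> norm1 z"
    if g: "g \<in> (\<lambda>b. (\<lambda>n. b n - P b n)) ` l1" and z: "z \<in> annihilator Y" "z \<noteq> (\<lambda>n. 0)" for g z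
  proof -
    from g obtain b where bl1: "b \<in> l1" and gb: "g = (\<lambda>n. b n - P b n)" by auto
    have gl1: "g \<in> l1" unfolding gb by (rule l1_diff[OF bl1 Pl1])
    have gk: "g k = 0" unfolding gb P_def using ak by simp
    from z obtain c where zc: "z = (\<lambda>n. c * a n)" unfolding ann by blast
    have c: "c \<noteq> 0" using z(2) zc by auto
    have "(\<lambda>n. g n + z n) = g(k := c * a k)"
      using gk sing by (auto simp: fun_eq_iff zc)
    then have ngz: "norm1 (\<lambda>n. g n + z n) = norm1 g + \<bar>c * a k\<bar>"
      using norm1_upd[OF gl1, of k "c * a k"] gk by simp
    have nz: "norm1 z = \<bar>c * a k\<bar>" unfolding zc by (subst norm1_scale[OF al1]) (simp add: na abs_mult)
    have "\<bar>c * a k\<bar> > 0" using c ak by simp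
    then show ?thesis using ngz nz norm1_nonneg[OF gl1] by simp
  qed
  show ?thesis unfolding property_HB_c0_def Let_def
    using NP G by blast
qed




lemma HB_imp_single:
  assumes al1: "a \<in> l1" and anz: "a \<noteq> (\<lambda>n. 0)" and Yeq: "Y = {x \<in> c0. pairing a x = 0}"
    and HB: "property_HB_c0 Y"
  shows "\<exists>k. \<forall>n. n \<noteq> k \<longrightarrow> a n = 0"
proof (rule ccontr)
  assume ns: "\<not> ?thesis"
  from anz obtain k where ak: "a k \<noteq> 0" by auto
  from ns obtain j where jk: "j \<noteq> k" and aj: "a j \<noteq> 0" by auto
  have ann: "annihilator Y = {b. \<exists>c. b = (\<lambda>n. c * a n)}" by (rule annih[OF al1 anz Yeq])
  obtain P where NP: "norm_one_projection_onto P (annihilator Y)"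
    and G: "\<forall>g\<in>(\<lambda>a. (\<lambda>n. a n - P a n)) ` l1. \<forall>z\<in>annihilator Y. z \<noteq> (\<lambda>n. 0) \<longrightarrow>
             norm1 (\<lambda>n. g n + z n) > norm1 g \<and> norm1 (\<lambda>n. g n + z n) \<ge> norm1 z"
    using HB unfolding property_HB_c0_def Let_def by (elim exE conjE) (erule that)
  have Padd: "\<forall>a\<in>l1. \<forall>b\<in>l1. P (\<lambda>n. a n + b n) = (\<lambda>n. P a n + P b n)"
    using NP unfolding norm_one_projection_onto_def by (elim conjE) assumption
  have Pscale: "\<forall>a\<in>l1. \<forall>c::real. P (\<lambda>n. c * a n) = (\<lambda>n. c * P a n)"
    using NP unfolding norm_one_projection_onto_def by (elim conjE) assumption
  have Pidem: "\<forall>a\<in>l1. P (P a) = P a"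
    using NP unfolding norm_one_projection_onto_def by (elim conjE) assumption
  have Prange: "P ` l1 = annihilator Y"
    using NP unfolding norm_one_projection_onto_def by (elim conjE) assumption
  have Pbdd: "bdd_above ((\<lambda>a. norm1 (P a)) ` {a \<in> l1. norm1 a \<le> 1})"
    using NP unfolding norm_one_projection_onto_def by (elim conjE) assumption
  have Psup: "Sup ((\<lambda>a. norm1 (P a)) ` {a \<in> l1. norm1 a \<le> 1}) = 1"
    using NP unfolding norm_one_projection_onto_def by (elim conjE) assumption
  have Pann: "P b \<in> annihilator Y" if "b \<in> l1" for b unfolding Prange[symmetric] using that by (rule imageI)
  have annl1: "annihilator Y \<subseteq> l1" unfolding annihilator_def by blast
  have Pl1: "P b \<in> l1" if "b \<in> l1" for b using Pann[OF that] annl1 by blast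
  define \<phi> where "\<phi> b = P b k / a k" for b
  have Pform: "P b = (\<lambda>n. \<phi> b * a n)" if bl: "b \<in> l1" for b
  proof -
    obtain c where c: "P b = (\<lambda>n. c * a n)" using Pann[OF bl] unfolding ann by blast
    then have "P b k = c * a k" by simp
    then have "c = \<phi> b" unfolding \<phi>_def using ak by simp
    then show ?thesis using c by simp
  qed
  define A where "A = norm1 a"
  have Apos: "A > 0"
    using norm1_ge_single[OF al1, of k] ak unfolding A_def by simp
  have Pnorm: "norm1 (P b) \<le> norm1 b" if bl1: "b \<in> l1" for b
  proof (cases "norm1 b = 0")
    case True
    have "\<forall>n. \<bar>b n\<bar> = 0"
      using True suminf_eq_zero_iff[OF l1_summable[OF bl1]] unfolding norm1_def by simp
    then have b0: "b = (\<lambda>n. 0 * b n)" by auto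
    have "P b = (\<lambda>n. 0 * P b n)" by (subst b0, rule Pscale[rule_format, OF bl1])
    then have "P b = (\<lambda>n. 0)" by simp
    then show ?thesis using norm1_nonneg[OF bl1] by (simp add: norm1_zero)
  next
    case False
    define s where "s = norm1 b"
    have s: "s > 0" using False norm1_nonneg[OF bl1] unfolding s_def by simp
    define b' where "b' = (\<lambda>n. (1 / s) * b n)"
    have b'l1: "b' \<in> l1" unfolding b'_def by (rule l1_scale[OF bl1])
    have nb': "norm1 b' = 1" unfolding b'_def using s by (subst norm1_scale[OF bl1]) (simp add: s_def)
    have mem: "norm1 (P b') \<in> (\<lambda>a. norm1 (P a)) ` {a \<in> l1. norm1 a \<le> 1}"
      by (rule imageI) (use b'l1 nb' in simp)
    have "norm1 (P b') \<le> Sup ((\<lambda>a. norm1 (P a)) ` {a \<in> l1. norm1 a \<le> 1})"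
      by (rule cSup_upper[OF mem Pbdd])
    then have "norm1 (P b') \<le> 1" unfolding Psup .
    moreover have "P b' = (\<lambda>n. (1 / s) * P b n)" unfolding b'_def by (rule Pscale[rule_format, OF bl1])
    moreover have "norm1 (\<lambda>n. (1 / s) * P b n) = (1 / s) * norm1 (P b)"
      using s by (subst norm1_scale[OF Pl1[OF bl1]]) simp
    ultimately have "(1 / s) * norm1 (P b) \<le> 1" by simp
    then show ?thesis using s unfolding s_def by (simp add: field_simps)
  qed
  have \<phi>bound: "\<bar>\<phi> b\<bar> * A \<le> norm1 b" if bl1: "b \<in> l1" for b
    using Pnorm[OF bl1] unfolding Pform[OF bl1] A_def by (subst (asm) norm1_scale[OF al1]) simp
  have Pa: "P a = a"
  proof -
    have "a \<in> annihilator Y" unfolding ann by (intro CollectI exI[of _ 1]) simp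
    then have "a \<in> P ` l1" using Prange by simp
    then obtain b' where ab': "a = P b'" and b'l1: "b' \<in> l1" by (rule imageE)
    show ?thesis using Pidem b'l1 ab' by simp
  qed
  have \<phi>a: "\<phi> a = 1" unfolding \<phi>_def Pa using ak by simp
  obtain i where ai: "a i \<noteq> 0" and ai2: "2 * \<bar>a i\<bar> \<le> A"
  proof (cases "\<bar>a k\<bar> \<le> \<bar>a j\<bar>")
    case True
    then show ?thesis using that[of k] ak two_le_norm1[OF al1 jk] unfolding A_def by simp
  next
    case False
    then show ?thesis using that[of j] aj two_le_norm1[OF al1 jk] unfolding A_def by simp
  qed
  define b where "b = (\<lambda>n::nat. 0::real)(i := a i)"
  define r where "r = a(i := 0)"
  have bl1: "b \<in> l1" unfolding b_def by (rule l1_upd[OF l1_zero])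
  have rl1: "r \<in> l1" unfolding r_def by (rule l1_upd[OF al1])
  have nb: "norm1 b = \<bar>a i\<bar>" unfolding b_def by (simp add: norm1_upd[OF l1_zero] norm1_zero)
  have nr: "norm1 r = A - \<bar>a i\<bar>" unfolding r_def A_def by (simp add: norm1_upd[OF al1])
  have abr: "a = (\<lambda>n. b n + r n)" unfolding b_def r_def by (auto simp: fun_eq_iff)
  have "P a = (\<lambda>n. P b n + P r n)" by (subst abr, rule Padd[rule_format, OF bl1 rl1])
  then have "P a k = P b k + P r k" by (simp add: fun_eq_iff)
  then have \<phi>add: "\<phi> a = \<phi> b + \<phi> r" unfolding \<phi>_def by (simp add: add_divide_distrib)
  define t where "t = \<phi> b"
  have "\<bar>\<phi> r\<bar> * A \<le> A - \<bar>a i\<bar>" using \<phi>bound[OF rl1] nr by simp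
  then have "\<bar>\<phi> r\<bar> * A < A" using ai by simp
  then have "\<bar>\<phi> r\<bar> < 1" using Apos by simp
  then have t0: "t \<noteq> 0" using \<phi>add \<phi>a unfolding t_def by auto
  define g where "g = (\<lambda>n. b n - P b n)"
  define z where "z = (\<lambda>n. t * a n)"
  have gG: "g \<in> (\<lambda>a. (\<lambda>n. a n - P a n)) ` l1" unfolding g_def using bl1 by (rule imageI)
  have zA: "z \<in> annihilator Y" unfolding ann z_def by (intro CollectI exI[of _ t]) (rule refl)
  have z0: "z \<noteq> (\<lambda>n. 0)"
  proof
    assume "z = (\<lambda>n. 0)"
    then have "z k = 0" by simp
    then show False using t0 ak unfolding z_def by simp
  qed
  have gz: "(\<lambda>n. g n + z n) = b"
    unfolding g_def z_def t_def Pform[OF bl1] by simp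
  have Pbt: "P b = (\<lambda>n. t * a n)" using Pform[OF bl1] unfolding t_def .
  have geq: "g = (\<lambda>n. - t * a n)(i := a i - t * a i)"
    unfolding g_def Pbt by (auto simp: fun_eq_iff b_def)
  have ng: "norm1 g = \<bar>t\<bar> * A - \<bar>t\<bar> * \<bar>a i\<bar> + \<bar>a i - t * a i\<bar>"
    unfolding geq norm1_upd[OF l1_scale[OF al1]] norm1_scale[OF al1] A_def by (simp add: abs_mult)
  have "\<bar>a i - t * a i\<bar> = \<bar>a i\<bar> * \<bar>1 - t\<bar>" by (simp add: abs_mult[symmetric] algebra_simps)
  moreover have "\<bar>t\<bar> * A \<ge> \<bar>t\<bar> * (2 * \<bar>a i\<bar>)" using ai2 by (simp add: mult_left_mono)
  moreover have "\<bar>a i\<bar> * \<bar>1 - t\<bar> + \<bar>a i\<bar> * \<bar>t\<bar> \<ge> \<bar>a i\<bar>"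
  proof -
    have "\<bar>1 - t\<bar> + \<bar>t\<bar> \<ge> 1" by linarith
    then have "\<bar>a i\<bar> * (\<bar>1 - t\<bar> + \<bar>t\<bar>) \<ge> \<bar>a i\<bar> * 1" by (intro mult_left_mono) auto
    then show ?thesis by (simp add: algebra_simps)
  qed
  ultimately have "norm1 g \<ge> \<bar>a i\<bar>" unfolding ng by (simp add: algebra_simps)
  moreover have "norm1 (\<lambda>n. g n + z n) > norm1 g" using bspec[OF bspec[OF G gG] zA] z0 by simp
  ultimately show False unfolding gz nb by simp
qed



theorem corollary3p17:
  assumes "hyperplane_c0 Y"
  shows "property_HB_c0 Y \<longleftrightarrow> M_summand_c0 Y"
proof -
  obtain a where al1: "a \<in> l1" and anz: "a \<noteq> (\<lambda>n. 0)" and Yeq: "Y = {x \<in> c0. pairing a x = 0}"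
    by (rule hyperplane_functional[OF assms])
  have "property_HB_c0 Y \<longleftrightarrow> (\<exists>k. \<forall>n. n \<noteq> k \<longrightarrow> a n = 0)"
  proof
    assume "property_HB_c0 Y"
    then show "\<exists>k. \<forall>n. n \<noteq> k \<longrightarrow> a n = 0" by (rule HB_imp_single[OF al1 anz Yeq])
  next
    assume "\<exists>k. \<forall>n. n \<noteq> k \<longrightarrow> a n = 0"
    then obtain k where sk: "\<forall>n. n \<noteq> k \<longrightarrow> a n = 0" by blast
    have ak: "a k \<noteq> 0" using anz sk by auto
    show "property_HB_c0 Y" by (rule single_imp_HB[OF al1 ak _ Yeq]) (use sk in blast)
  qed
  moreover have "M_summand_c0 Y \<longleftrightarrow> (\<exists>k. \<forall>n. n \<noteq> k \<longrightarrow> a n = 0)"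
  proof
    assume "M_summand_c0 Y"
    then show "\<exists>k. \<forall>n. n \<noteq> k \<longrightarrow> a n = 0" by (rule M_imp_single[OF al1 anz Yeq])
  next
    assume "\<exists>k. \<forall>n. n \<noteq> k \<longrightarrow> a n = 0"
    then obtain k where sk: "\<forall>n. n \<noteq> k \<longrightarrow> a n = 0" by blast
    have ak: "a k \<noteq> 0" using anz sk by auto
    show "M_summand_c0 Y" by (rule single_imp_M[OF al1 ak _ Yeq]) (use sk in blast)
  qed
  ultimately show ?thesis by simp
qed

end
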